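(* Let $(\mathcal{S},h_{ij},K_{ij})$ be an initial data set of the vacuum Einstein field equations with inner boundary $\partial\mathcal{S}$ and unit normal $\rho^i$. The boundary value problem consisting of $\mathscr{P}\circ\mathscr{P}^*(X,X_i)=(0,0)$ on $\mathcal{S}$ together with the boundary operators $X$, $\Delta_hX$, $X_i$, $\partial_\rho X_i$ on $\partial\mathcal{S}$ satisfies the Lopatinskij--Shapiro condition.
   Context: An initial data set is $(\mathcal{S},h_{ij},K_{ij})$ with $h$ Riemannian (connection $D$, Ricci $r_{ij}$, scalar curvature $r$, $\Delta_h=D^iD_i$), $K_{ij}$ symmetric with $K=h^{ij}K_{ij}$, satisfying $r+K^2-K_{ij}K^{ij}=0$, $D^jK_{ij}-D_iK=0$. With $F_{ij}=2X(Kh_{ij}-K_{ij})$, $H_{ij}=2X(K^k{}_iK_{jk}-KK_{ij})-K_{k(i}D_{j)}X^k+\tfrac12K_{ij}D_kX^k+\tfrac12K_{kl}D^kX^lh_{ij}-\tfrac12X^kD_kK_{ij}+\tfrac12X^kD_kKh_{ij}$, $\bar\gamma_{ij}=D_iD_jX-Xr_{ij}-\Delta_hXh_{ij}+H_{ij}$, $\bar Q_{ij}=-\Delta_h(D_{(i}X_{j)}-D^kX_kh_{ij}+F_{ij})$, traces $\bar\gamma,\bar Q$, $\bar H=2(K\bar Q-K^{ij}\bar Q_{ij})+2(K^{ki}K^j{}_k-KK^{ij})\bar\gamma_{ij}$, $\bar F_i=(D_iK^{kj}-D^kK^j{}_i)\bar\gamma_{jk}-(K^k{}_iD^j-\tfrac12K^{kj}D_i)\bar\gamma_{jk}+\tfrac12K^k{}_iD_k\bar\gamma$,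 the approximate Killing operator is $\mathscr{P}\circ\mathscr{P}^*(X,X_i)=\big(2\Delta_h\Delta_hX-r^{ij}D_iD_jX+2r\Delta_hX+\tfrac32D^irD_iX+(\tfrac12\Delta_hr+r_{ij}r^{ij})X+D^iD^jH_{ij}-\Delta_hH_k{}^k-r^{ij}H_{ij}+\bar H,\ D^j\Delta_hD_{(i}X_{j)}+D_i\Delta_hD^kX_k+D^j\Delta_hF_{ij}-D_i\Delta_hF_k{}^k-\bar F_i\big)$. Lopatinskij--Shapiro condition: keep only the principal (highest-order) parts of the interior operator and of the boundary operators. Fix a boundary point $x_*$, choose coordinates with $x^1=\rho$ along the normal, freeze coefficients at $x_*$, and replace $\partial_1\to d/d\rho$, $\partial_j\to \mathrm{i}\xi_j$ ($j\ge2$) with $\vec\xi\neq0$. The pair (operator, boundary operators) satisfies the LS condition if, at every boundary point and every $\vec\xi\neq0$, the only solution of the resulting ODE system with homogeneous boundary conditions at $\rho=0$ which tends to $0$ as $\rho\to\infty$ is the trivial one. *)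

theory Defs
  imports "HOL-Analysis.Analysis"
begin

text \<open>Frozen-coefficient model of the Lopatinskij--Shapiro test problem on a 3-dimensional
initial data set.  Coordinates are indexed by 0,1,2; index 0 is the coordinate along the
normal (the ODE variable rho), indices 1,2 are tangential with dual variables xi 1, xi 2.
G is the inverse metric h^{ij} frozen at the boundary point.\<close>

definition dop :: "(nat \<Rightarrow> real) \<Rightarrow> nat \<Rightarrow> (real \<Rightarrow> complex) \<Rightarrow> (real \<Rightarrow> complex)" where
  "dop \<xi> i (f :: real \<Rightarrow> complex) = (if i = 0 then (\<lambda>r. vector_derivative f (at r)) else (\<lambda>r. \<i> * complex_of_real (\<xi> i) * f r))"

definition lap :: "(nat \<Rightarrow> nat \<Rightarrow> real) \<Rightarrow> (nat \<Rightarrow> real) \<Rightarrow> (real \<Rightarrow> complex) \<Rightarrow> (real \<Rightarrow> complex)" where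
  "lap G \<xi> (f :: real \<Rightarrow> complex) = (\<lambda>r. \<Sum>i<3. \<Sum>j<3. complex_of_real (G i j) * dop \<xi> i (dop \<xi> j f) r)"

text \<open>Principal part of the scalar component: 2 Delta_h Delta_h X.\<close>
definition Pscal :: "(nat \<Rightarrow> nat \<Rightarrow> real) \<Rightarrow> (nat \<Rightarrow> real) \<Rightarrow> (real \<Rightarrow> complex) \<Rightarrow> (real \<Rightarrow> complex)" where
  "Pscal G \<xi> (X :: real \<Rightarrow> complex) = (\<lambda>r. 2 * lap G \<xi> (lap G \<xi> X) r)"

text \<open>Principal part of the covector component:
  D^j Delta_h D_(i X_j) + D_i Delta_h D^k X_k.\<close>
definition Pvec :: "(nat \<Rightarrow> nat \<Rightarrow> real) \<Rightarrow> (nat \<Rightarrow> real) \<Rightarrow> (nat \<Rightarrow> real \<Rightarrow> complex) \<Rightarrow> nat \<Rightarrow> (real \<Rightarrow> complex)" where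
  "Pvec G \<xi> Xs i = (\<lambda>r.
     (\<Sum>j<3. \<Sum>l<3. complex_of_real (G j l) *
        dop \<xi> l (lap G \<xi> (\<lambda>s. (dop \<xi> i (Xs j) s + dop \<xi> j (Xs i) s) / 2)) r)
     + dop \<xi> i (lap G \<xi> (\<lambda>s. \<Sum>k<3. \<Sum>l<3. complex_of_real (G k l) * dop \<xi> k (Xs l) s)) r)"

text \<open>Normal derivative rho^j d_j with rho^j = h^{j0} / sqrt(h^{00}) (unit normal).\<close>
definition nder :: "(nat \<Rightarrow> nat \<Rightarrow> real) \<Rightarrow> (nat \<Rightarrow> real) \<Rightarrow> (real \<Rightarrow> complex) \<Rightarrow> (real \<Rightarrow> complex)" where
  "nder G \<xi> (f :: real \<Rightarrow> complex) = (\<lambda>r. \<Sum>j<3. complex_of_real (G j 0 / sqrt (G 0 0)) * dop \<xi> j f r)"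

definition smooth_fun :: "(real \<Rightarrow> complex) \<Rightarrow> bool" where
  "smooth_fun (f :: real \<Rightarrow> complex) \<longleftrightarrow> (\<forall>k r. ((\<lambda>g t. vector_derivative g (at t)) ^^ k) f differentiable (at r))"

definition inv_metric :: "(nat \<Rightarrow> nat \<Rightarrow> real) \<Rightarrow> bool" where
  "inv_metric G \<longleftrightarrow> (\<forall>i<3. \<forall>j<3. G i j = G j i) \<and>
     (\<forall>v :: nat \<Rightarrow> real. (\<exists>i<3. v i \<noteq> 0) \<longrightarrow> (\<Sum>i<3. \<Sum>j<3. G i j * v i * v j) > 0)"

end

theory Submission
  imports Defs "HOL-Computational_Algebra.Polynomial"
begin


abbreviation Dn :: "nat \<Rightarrow> (real \<Rightarrow> complex) \<Rightarrow> (real \<Rightarrow> complex)" where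
  "Dn n f \<equiv> ((\<lambda>g t. vector_derivative g (at t)) ^^ n) f"

lemma Dn_Suc: "Dn (Suc n) f = (\<lambda>t. vector_derivative (Dn n f) (at t))"
  by simp

lemma Dn_Dn: "Dn k (Dn n f) = Dn (k+n) f"
  by (simp add: funpow_add)

lemma smooth_Dn: "smooth_fun f \<Longrightarrow> smooth_fun (Dn n f)"
  unfolding smooth_fun_def by (simp add: Dn_Dn)

lemma smooth_diff: "smooth_fun f \<Longrightarrow> f differentiable at r"
  unfolding smooth_fun_def by (metis funpow_0)

lemma smooth_Dn_diff: "smooth_fun f \<Longrightarrow> Dn n f differentiable at r"
  unfolding smooth_fun_def by blast

lemma hvd_cmult:
  fixes g :: "real \<Rightarrow> complex"
  assumes "g differentiable at t"
  shows "((\<lambda>r. c * g r) has_vector_derivative c * vector_derivative g (at t)) (at t)"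
proof -
  have "(g has_vector_derivative vector_derivative g (at t)) (at t)"
    using assms vector_derivative_works by blast
  from has_vector_derivative_mult[OF has_vector_derivative_const[of c "at t"] this]
  show ?thesis by simp
qed

lemma Dn_lin:
  assumes "finite S" "\<And>x. x \<in> S \<Longrightarrow> smooth_fun (F x)"
  shows "Dn k (\<lambda>r. \<Sum>x\<in>S. c x * F x r) = (\<lambda>r. \<Sum>x\<in>S. c x * Dn k (F x) r)"
proof (induction k)
  case 0 then show ?case by simp
next
  case (Suc k)
  show ?case
  proof
    fix t
    have "((\<lambda>r. \<Sum>x\<in>S. c x * Dn k (F x) r) has_vector_derivative
          (\<Sum>x\<in>S. c x * vector_derivative (Dn k (F x)) (at t))) (at t)"
      by (intro has_vector_derivative_sum hvd_cmult smooth_Dn_diff assms)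
    then show "Dn (Suc k) (\<lambda>r. \<Sum>x\<in>S. c x * F x r) t = (\<Sum>x\<in>S. c x * Dn (Suc k) (F x) t)"
      using Suc by (simp add: vector_derivative_at)
  qed
qed

lemma smooth_lin:
  assumes "finite S" "\<And>x. x \<in> S \<Longrightarrow> smooth_fun (F x)"
  shows "smooth_fun (\<lambda>r. \<Sum>x\<in>S. c x * F x r)"
  unfolding smooth_fun_def
proof (intro allI)
  fix k t
  have "((\<lambda>r. \<Sum>x\<in>S. c x * Dn k (F x) r) has_vector_derivative
          (\<Sum>x\<in>S. c x * vector_derivative (Dn k (F x)) (at t))) (at t)"
    by (intro has_vector_derivative_sum hvd_cmult smooth_Dn_diff assms)
  then show "Dn k (\<lambda>r. \<Sum>x\<in>S. c x * F x r) differentiable at t"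
    by (subst Dn_lin[OF assms]) (auto intro: differentiableI_vector)
qed

lemma smooth_add: "smooth_fun f \<Longrightarrow> smooth_fun g \<Longrightarrow> smooth_fun (\<lambda>r. f r + g r)"
  using smooth_lin[of "{0::nat,1}" "\<lambda>x. if x = 0 then f else g" "\<lambda>_. 1"] by simp

lemma smooth_cmult: "smooth_fun f \<Longrightarrow> smooth_fun (\<lambda>r. c * f r)"
  using smooth_lin[of "{0::nat}" "\<lambda>x. f" "\<lambda>_. c"] by simp

lemma Dn_add: "smooth_fun f \<Longrightarrow> smooth_fun g \<Longrightarrow> Dn k (\<lambda>r. f r + g r) = (\<lambda>r. Dn k f r + Dn k g r)"
  using Dn_lin[where S="{0::nat,1}" and F="\<lambda>x. if x = 0 then f else g" and c="\<lambda>_. 1"] by simp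

lemma Dn_cmult: "smooth_fun f \<Longrightarrow> Dn k (\<lambda>r. c * f r) = (\<lambda>r. c * Dn k f r)"
  using Dn_lin[where S="{0::nat}" and F="\<lambda>x. f" and c="\<lambda>_. c"] by simp

lemma Dn_sum:
  assumes "finite S" "\<And>x. x \<in> S \<Longrightarrow> smooth_fun (F x)"
  shows "Dn k (\<lambda>r. \<Sum>x\<in>S. F x r) = (\<lambda>r. \<Sum>x\<in>S. Dn k (F x) r)"
  using Dn_lin[OF assms, where k=k and c="\<lambda>_. 1"] by simp

lemma smooth_sum:
  assumes "finite S" "\<And>x. x \<in> S \<Longrightarrow> smooth_fun (F x)"
  shows "smooth_fun (\<lambda>r. \<Sum>x\<in>S. F x r)"
  using smooth_lin[OF assms, where c="\<lambda>_. 1"] by simp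



definition Ap :: "complex poly \<Rightarrow> (real \<Rightarrow> complex) \<Rightarrow> real \<Rightarrow> complex" where
  "Ap p f = (\<lambda>r. \<Sum>n\<le>degree p. coeff p n * Dn n f r)"

lemma Ap_bound: "degree p \<le> N \<Longrightarrow> Ap p f r = (\<Sum>n\<le>N. coeff p n * Dn n f r)"
  unfolding Ap_def
  by (rule sum.mono_neutral_left) (auto simp: coeff_eq_0)

lemma Ap_add: "Ap (p + q) f r = Ap p f r + Ap q f r"
proof -
  let ?N = "max (degree p) (degree q)"
  have "degree (p+q) \<le> ?N" by (rule degree_add_le) auto
  then show ?thesis
    by (simp add: Ap_bound[of _ ?N] sum.distrib distrib_right)
qed

lemma Ap_smult: "Ap (smult c p) f r = c * Ap p f r"
proof -
  have "degree (smult c p) \<le> degree p" by simp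
  then show ?thesis
    by (simp add: Ap_bound[of _ "degree p"] sum_distrib_left mult.assoc)
qed

lemma Ap_0[simp]: "Ap 0 f r = 0"
  by (simp add: Ap_def)

lemma Ap_const: "Ap [:c:] f r = c * f r"
  by (simp add: Ap_def)

lemma Ap_one: "Ap 1 f = f"
  by (simp add: Ap_def fun_eq_iff)

lemma Ap_minus: "Ap (- p) f r = - Ap p f r"
  using Ap_smult[of "-1" p f r] by simp

lemma Ap_diff: "Ap (p - q) f r = Ap p f r - Ap q f r"
  using Ap_add[of p "-q" f r] Ap_minus[of q f r] by simp

lemma Ap_sum: "finite S \<Longrightarrow> Ap (\<Sum>x\<in>S. P x) f r = (\<Sum>x\<in>S. Ap (P x) f r)"
  by (induction S rule: finite_induct) (auto simp: Ap_add)

lemma smooth_Ap: "smooth_fun f \<Longrightarrow> smooth_fun (Ap p f)"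
  unfolding Ap_def by (rule smooth_lin) (auto intro: smooth_Dn)

lemma Dn_Ap: "smooth_fun f \<Longrightarrow> Dn k (Ap p f) = (\<lambda>r. \<Sum>n\<le>degree p. coeff p n * Dn (k+n) f r)"
  unfolding Ap_def by (subst Dn_lin) (auto intro: smooth_Dn simp: Dn_Dn)

lemma Ap_D: "smooth_fun f \<Longrightarrow> vector_derivative (Ap p f) (at r) = Ap (pCons 0 p) f r"
proof -
  assume f: "smooth_fun f"
  have "vector_derivative (Ap p f) (at r) = Dn 1 (Ap p f) r" by simp
  also have "\<dots> = (\<Sum>n\<le>degree p. coeff p n * Dn (Suc n) f r)"
    by (simp only: Dn_Ap[OF f]) simp
  also have "\<dots> = Ap (pCons 0 p) f r"
  proof -
    have "degree (pCons 0 p) \<le> Suc (degree p)" by (simp add: degree_pCons_le)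
    then have "Ap (pCons 0 p) f r = (\<Sum>n\<le>Suc (degree p). coeff (pCons 0 p) n * Dn n f r)"
      by (rule Ap_bound)
    also have "\<dots> = (\<Sum>n\<le>degree p. coeff p n * Dn (Suc n) f r)"
      by (subst sum.atMost_Suc_shift) simp
    finally show ?thesis by simp
  qed
  finally show ?thesis .
qed

lemma pCons_split: "pCons a p = [:a:] + pCons 0 p"
  by simp

lemma Ap_pCons: "smooth_fun f \<Longrightarrow> Ap (pCons a p) f r = a * f r + vector_derivative (Ap p f) (at r)"
proof -
  assume f: "smooth_fun f"
  have "Ap (pCons a p) f r = Ap ([:a:] + pCons 0 p) f r" by simp
  also have "\<dots> = a * f r + Ap (pCons 0 p) f r" by (simp only: Ap_add Ap_const)
  finally show ?thesis using Ap_D[OF f] by simp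
qed

lemma Ap_mult: "smooth_fun f \<Longrightarrow> Ap (p * q) f = Ap p (Ap q f)"
proof (induction p)
  case 0 then show ?case by (simp add: fun_eq_iff)
next
  case (pCons a p)
  show ?case
  proof
    fix r
    have "Ap (pCons a p * q) f r = Ap (smult a q + pCons 0 (p * q)) f r" by simp
    also have "\<dots> = a * Ap q f r + vector_derivative (Ap (p*q) f) (at r)"
      using pCons by (simp add: Ap_add Ap_smult Ap_D[symmetric])
    also have "\<dots> = Ap (pCons a p) (Ap q f) r"
      using pCons by (simp add: Ap_pCons smooth_Ap)
    finally show "Ap (pCons a p * q) f r = Ap (pCons a p) (Ap q f) r" .
  qed
qed

definition sig :: "(nat \<Rightarrow> real) \<Rightarrow> nat \<Rightarrow> complex poly" where
  "sig \<xi> l = (if l = 0 then [:0,1:] else [:\<i> * complex_of_real (\<xi> l):])"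

lemma dop_Ap: "smooth_fun f \<Longrightarrow> dop \<xi> l f = Ap (sig \<xi> l) f"
proof (cases "l = 0")
  case True
  assume f: "smooth_fun f"
  have "Ap [:0,1:] f r = vector_derivative f (at r)" for r
  proof -
    have "Ap [:1:] f = f" using Ap_one[of f] by (simp add: one_pCons)
    then show ?thesis using Ap_pCons[OF f, of 0 1 r] by (simp add: one_pCons)
  qed
  then show ?thesis using True by (simp add: dop_def sig_def fun_eq_iff)
next
  case False
  then show ?thesis by (simp add: dop_def sig_def fun_eq_iff Ap_const)
qed

definition Lam :: "(nat \<Rightarrow> nat \<Rightarrow> real) \<Rightarrow> (nat \<Rightarrow> real) \<Rightarrow> complex poly" where
  "Lam G \<xi> = (\<Sum>i<3. \<Sum>j<3. smult (complex_of_real (G i j)) (sig \<xi> i * sig \<xi> j))"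

lemma lap_Ap: "smooth_fun f \<Longrightarrow> lap G \<xi> f = Ap (Lam G \<xi>) f"
proof -
  assume f: "smooth_fun f"
  have "dop \<xi> i (dop \<xi> j f) = Ap (sig \<xi> i * sig \<xi> j) f" for i j
    using f by (simp add: dop_Ap smooth_Ap Ap_mult)
  then show ?thesis
    by (simp add: lap_def Lam_def fun_eq_iff Ap_sum Ap_smult)
qed



lemma Mform:
  fixes g :: "nat \<Rightarrow> nat \<Rightarrow> 'a::comm_ring_1" and s :: "nat \<Rightarrow> 'a"
  assumes "g 1 0 = g 0 1" "g 2 0 = g 0 2" "g 2 1 = g 1 2" "i < 3" "m < 3"
  shows "(\<Sum>j<3. \<Sum>l<3. g j l * (s l * (L * (h * ((if m=j then s i else 0) + (if m = i then s j else 0)))))) + s i * (L * (\<Sum>k<3. \<Sum>l<3. g k l * (if m = l then s k else 0)))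
    = h * L * s i * (\<Sum>k<3. g k m * s k) + s i * L * (\<Sum>k<3. g k m * s k) + (if m = i then h * L * (\<Sum>j<3. \<Sum>l<3. g j l * s j * s l) else 0)"
proof -
  have "m = 0 \<or> m = 1 \<or> m = 2" "i = 0 \<or> i = 1 \<or> i = 2" using assms(4,5) by auto
  then show ?thesis using assms(1-3)
    by (elim disjE; simp add: eval_nat_numeral algebra_simps)
qed

lemma Final:
  fixes g :: "nat \<Rightarrow> nat \<Rightarrow> 'a::comm_ring_1" and s :: "nat \<Rightarrow> 'a"
  assumes "g 1 0 = g 0 1" "g 2 0 = g 0 2" "g 2 1 = g 1 2" "i < 3" "m < 3"
  and L: "L = (\<Sum>j<3. \<Sum>l<3. g j l * s j * s l)" and h: "2 * h = 1"
  and M: "\<And>i. i < 3 \<Longrightarrow> M i = h * L * s i * W + s i * L * W + (if m = i then h * L * L else 0)"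
  and W: "W = (\<Sum>k<3. g m k * s k)"
  shows "2 * L * M i - 3 * h * s i * (\<Sum>j<3. \<Sum>l<3. g j l * s l * M j) = (if m = i then L^3 else 0)"
proof -
  have S: "(\<Sum>j<3. \<Sum>l<3. g j l * s l * M j) = (\<Sum>j<3. \<Sum>l<3. g j l * s l * (h * L * s j * W + s j * L * W + (if m = j then h * L * L else 0)))"
    using M by (simp add: eval_nat_numeral)
  also have "\<dots> = (h + 1) * L * W * (\<Sum>j<3. \<Sum>l<3. g j l * s j * s l) + h * L * L * (\<Sum>k<3. g m k * s k)"
  proof -
    have "m = 0 \<or> m = 1 \<or> m = 2" using assms(5) by auto
    then show ?thesis using assms(1-3)
      by (elim disjE; simp add: eval_nat_numeral algebra_simps)
  qed
  also have "\<dots> = (h + 1) * L * W * L + h * L * L * W" unfolding L[symmetric] W[symmetric] ..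
  finally have S': "(\<Sum>j<3. \<Sum>l<3. g j l * s l * M j) = (2*h + 1) * L * L * W" by (simp add: algebra_simps)
  have "2 * L * M i - 3 * h * s i * ((2*h + 1) * L * L * W) = (if m = i then L^3 else 0)"
  proof -
    have "2 * L * M i - 3 * h * s i * ((2*h + 1) * L * L * W) - (if m = i then L^3 else 0)
       = (2*h - 1) * ((if m = i then L^3 else 0) - (3*h+2) * L * L * s i * W)"
      unfolding M[OF assms(4)] by (cases "m = i") (simp_all add: power3_eq_cube algebra_simps)
    then show ?thesis using h by simp
  qed
  then show ?thesis unfolding S' .
qed


definition Av :: "(nat \<Rightarrow> complex poly) \<Rightarrow> (nat \<Rightarrow> real \<Rightarrow> complex) \<Rightarrow> real \<Rightarrow> complex" where
  "Av P Xs = (\<lambda>r. \<Sum>m<3. Ap (P m) (Xs m) r)"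

lemma smooth_Av: "\<forall>m<3. smooth_fun (Xs m) \<Longrightarrow> smooth_fun (Av P Xs)"
  unfolding Av_def by (rule smooth_sum) (auto intro: smooth_Ap)

lemma Ap_Av:
  assumes sm: "\<forall>m<3. smooth_fun (Xs m)"
  shows "Ap p (Av P Xs) = Av (\<lambda>m. p * P m) Xs"
proof
  fix r
  have "Ap p (Av P Xs) r = (\<Sum>n\<le>degree p. coeff p n * (\<Sum>m<3. Dn n (Ap (P m) (Xs m)) r))"
  proof -
    have "Dn n (Av P Xs) = (\<lambda>r. \<Sum>m<3. Dn n (Ap (P m) (Xs m)) r)" for n
      unfolding Av_def by (rule Dn_sum) (use sm smooth_Ap in auto)
    then show ?thesis by (simp add: Ap_def[of p])
  qed
  also have "\<dots> = (\<Sum>m<3. Ap p (Ap (P m) (Xs m)) r)"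
    unfolding Ap_def by (simp add: sum_distrib_left sum.swap[of _ "{..<3}"])
  also have "\<dots> = Av (\<lambda>m. p * P m) Xs r"
    unfolding Av_def using sm by (intro sum.cong) (auto simp: Ap_mult)
  finally show "Ap p (Av P Xs) r = Av (\<lambda>m. p * P m) Xs r" .
qed

lemma Av_add: "Av (\<lambda>m. P m + Q m) Xs r = Av P Xs r + Av Q Xs r"
  by (simp add: Av_def Ap_add sum.distrib)

lemma Av_diff: "Av (\<lambda>m. P m - Q m) Xs r = Av P Xs r - Av Q Xs r"
  by (simp add: Av_def Ap_diff sum_subtractf)

lemma Av_cmult: "Av (\<lambda>m. [:c:] * P m) Xs r = c * Av P Xs r"
  by (simp add: Av_def Ap_smult sum_distrib_left)

lemma Av_sum: "finite S \<Longrightarrow> Av (\<lambda>m. \<Sum>x\<in>S. F x m) Xs r = (\<Sum>x\<in>S. Av (F x) Xs r)"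
  by (simp add: Av_def Ap_sum sum.swap[of _ S])

lemma Av_delta: "l < 3 \<Longrightarrow> Av (\<lambda>m. if m = l then p else 0) Xs r = Ap p (Xs l) r"
proof -
  assume l: "l < 3"
  have "Av (\<lambda>m. if m = l then p else 0) Xs r = (\<Sum>m<3. if m = l then Ap p (Xs m) r else 0)"
    unfolding Av_def by (intro sum.cong) auto
  then show ?thesis using l by simp
qed

abbreviation gg :: "(nat \<Rightarrow> nat \<Rightarrow> real) \<Rightarrow> nat \<Rightarrow> nat \<Rightarrow> complex poly" where
  "gg G j l \<equiv> [:complex_of_real (G j l):]"

abbreviation hh :: "complex poly" where "hh \<equiv> [:1/2:]"

definition Mv :: "(nat \<Rightarrow> nat \<Rightarrow> real) \<Rightarrow> (nat \<Rightarrow> real) \<Rightarrow> nat \<Rightarrow> nat \<Rightarrow> complex poly" where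
  "Mv G \<xi> i m = (\<Sum>j<3. \<Sum>l<3. gg G j l * (sig \<xi> l * (Lam G \<xi> * (hh * ((if m=j then sig \<xi> i else 0) + (if m = i then sig \<xi> j else 0))))))
     + sig \<xi> i * (Lam G \<xi> * (\<Sum>k<3. \<Sum>l<3. gg G k l * (if m = l then sig \<xi> k else 0)))"

lemma inner1:
  assumes sm: "\<forall>m<3. smooth_fun (Xs m)" and ij: "i < 3" "j < 3"
  shows "(\<lambda>s. (dop \<xi> i (Xs j) s + dop \<xi> j (Xs i) s) / 2)
       = Av (\<lambda>m. hh * ((if m=j then sig \<xi> i else 0) + (if m = i then sig \<xi> j else 0))) Xs"
proof
  fix r
  have "Av (\<lambda>m. hh * ((if m=j then sig \<xi> i else 0) + (if m = i then sig \<xi> j else 0))) Xs r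
     = (1/2) * (Av (\<lambda>m. if m=j then sig \<xi> i else 0) Xs r + Av (\<lambda>m. if m=i then sig \<xi> j else 0) Xs r)"
    by (simp only: Av_cmult Av_add)
  also have "\<dots> = (1/2) * (Ap (sig \<xi> i) (Xs j) r + Ap (sig \<xi> j) (Xs i) r)"
    using ij by (simp add: Av_delta)
  also have "\<dots> = (dop \<xi> i (Xs j) r + dop \<xi> j (Xs i) r) / 2"
    using sm ij by (simp add: dop_Ap)
  finally show "(dop \<xi> i (Xs j) r + dop \<xi> j (Xs i) r) / 2
     = Av (\<lambda>m. hh * ((if m=j then sig \<xi> i else 0) + (if m = i then sig \<xi> j else 0))) Xs r" by simp
qed

lemma inner2:
  assumes sm: "\<forall>m<3. smooth_fun (Xs m)"
  shows "(\<lambda>s. \<Sum>k<3. \<Sum>l<3. complex_of_real (G k l) * dop \<xi> k (Xs l) s)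
       = Av (\<lambda>m. \<Sum>k<3. \<Sum>l<3. gg G k l * (if m = l then sig \<xi> k else 0)) Xs"
proof
  fix r
  have "Av (\<lambda>m. \<Sum>k<3. \<Sum>l<3. gg G k l * (if m = l then sig \<xi> k else 0)) Xs r
     = (\<Sum>k<3. \<Sum>l<3. complex_of_real (G k l) * Av (\<lambda>m. if m = l then sig \<xi> k else 0) Xs r)"
    by (simp only: Av_sum finite_lessThan Av_cmult)
  also have "\<dots> = (\<Sum>k<3. \<Sum>l<3. complex_of_real (G k l) * dop \<xi> k (Xs l) r)"
    using sm by (intro sum.cong refl) (simp add: Av_delta dop_Ap)
  finally show "(\<Sum>k<3. \<Sum>l<3. complex_of_real (G k l) * dop \<xi> k (Xs l) r)
     = Av (\<lambda>m. \<Sum>k<3. \<Sum>l<3. gg G k l * (if m = l then sig \<xi> k else 0)) Xs r" by simp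
qed

lemma dop_Av: "\<forall>m<3. smooth_fun (Xs m) \<Longrightarrow> dop \<xi> l (Av P Xs) = Av (\<lambda>m. sig \<xi> l * P m) Xs"
  by (simp add: dop_Ap smooth_Av Ap_Av)

lemma lap_Av: "\<forall>m<3. smooth_fun (Xs m) \<Longrightarrow> lap G \<xi> (Av P Xs) = Av (\<lambda>m. Lam G \<xi> * P m) Xs"
  by (simp add: lap_Ap smooth_Av Ap_Av)

lemma Pvec_Av:
  assumes sm: "\<forall>m<3. smooth_fun (Xs m)" and i: "i < 3"
  shows "Pvec G \<xi> Xs i r = Av (Mv G \<xi> i) Xs r"
proof -
  have "Pvec G \<xi> Xs i r = (\<Sum>j<3. \<Sum>l<3. complex_of_real (G j l) *
       Av (\<lambda>m. sig \<xi> l * (Lam G \<xi> * (hh * ((if m=j then sig \<xi> i else 0) + (if m = i then sig \<xi> j else 0))))) Xs r)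
     + Av (\<lambda>m. sig \<xi> i * (Lam G \<xi> * (\<Sum>k<3. \<Sum>l<3. gg G k l * (if m = l then sig \<xi> k else 0)))) Xs r"
    unfolding Pvec_def inner2[OF sm]
    using sm i by (simp add: inner1 lap_Av dop_Av smooth_Av)
  also have "\<dots> = Av (Mv G \<xi> i) Xs r"
    unfolding Mv_def by (simp only: Av_add Av_sum finite_lessThan Av_cmult mult.assoc)
  finally show ?thesis .
qed



lemma vanish_D:
  assumes "\<forall>r>0. g r = 0" "r > 0"
  shows "vector_derivative g (at r) = 0"
proof -
  have "((\<lambda>_. 0) has_vector_derivative 0) (at r)" by simp
  then have "(g has_vector_derivative 0) (at r)"
    by (rule has_vector_derivative_transform_within_open[where S="{0<..}"]) (use assms in auto)
  then show ?thesis by (rule vector_derivative_at)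
qed

lemma vanish_Dn: "\<forall>r>0. g r = 0 \<Longrightarrow> \<forall>r>0. Dn n g r = 0"
proof (induction n)
  case 0 then show ?case by simp
next
  case (Suc n)
  then have "\<forall>r>0. Dn n g r = 0" by blast
  then show ?case by (simp del: funpow.simps add: Dn_Suc vanish_D)
qed

lemma vanish_Ap: "\<forall>r>0. g r = 0 \<Longrightarrow> r > 0 \<Longrightarrow> Ap p g r = 0"
  unfolding Ap_def using vanish_Dn[of g] by simp

lemma Av_cong: "(\<And>m. m < 3 \<Longrightarrow> P m = Q m) \<Longrightarrow> Av P Xs r = Av Q Xs r"
  unfolding Av_def by simp

lemma Lam_gg: "Lam G \<xi> = (\<Sum>j<3. \<Sum>l<3. gg G j l * sig \<xi> j * sig \<xi> l)"
  unfolding Lam_def by (simp add: mult.assoc)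

lemma vec_L3:
  assumes sm: "\<forall>m<3. smooth_fun (Xs m)"
    and sym: "\<forall>i<3. \<forall>j<3. G i j = G j i"
    and eq: "\<forall>i<3. \<forall>r\<ge>0. Pvec G \<xi> Xs i r = 0"
    and i: "i < 3" and r: "r > 0"
  shows "Ap (Lam G \<xi> ^ 3) (Xs i) r = 0"
proof -
  let ?L = "Lam G \<xi>" and ?s = "sig \<xi>" and ?g = "gg G"
  have Z: "Av (\<lambda>m. q * Mv G \<xi> j m) Xs r = 0" if "j < 3" for j q
  proof -
    have "\<forall>r>0. Av (Mv G \<xi> j) Xs r = 0"
      using eq that Pvec_Av[OF sm that] by auto
    then have "Ap q (Av (Mv G \<xi> j) Xs) r = 0" using r by (rule vanish_Ap)
    then show ?thesis using Ap_Av[OF sm] by metis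
  qed
  have g10: "?g 1 0 = ?g 0 1" "?g 2 0 = ?g 0 2" "?g 2 1 = ?g 1 2"
    using sym by auto
  have ID: "(if m = i then ?L^3 else 0) = 2 * ?L * Mv G \<xi> i m - 3 * hh * ?s i * (\<Sum>j<3. \<Sum>l<3. ?g j l * ?s l * Mv G \<xi> j m)"
    if m: "m < 3" for m
  proof -
    have W: "(\<Sum>k<3. ?g k m * ?s k) = (\<Sum>k<3. ?g m k * ?s k)"
      using sym m by (intro sum.cong) auto
    have M: "Mv G \<xi> j m = hh * ?L * ?s j * (\<Sum>k<3. ?g m k * ?s k) + ?s j * ?L * (\<Sum>k<3. ?g m k * ?s k) + (if m = j then hh * ?L * ?L else 0)"
      if j: "j < 3" for j
    proof -
      have "Mv G \<xi> j m = hh * ?L * ?s j * (\<Sum>k<3. ?g k m * ?s k) + ?s j * ?L * (\<Sum>k<3. ?g k m * ?s k) + (if m = j then hh * ?L * (\<Sum>j<3. \<Sum>l<3. ?g j l * ?s j * ?s l) else 0)"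
        unfolding Mv_def by (rule Mform[OF g10 j m])
      then show ?thesis by (simp only: W Lam_gg[symmetric])
    qed
    have h: "2 * hh = 1" by (subst mult_2) (simp add: one_pCons)
    show ?thesis using Final[OF g10 i m Lam_gg h M refl] by simp
  qed
  have "Ap (?L ^ 3) (Xs i) r = Av (\<lambda>m. if m = i then ?L^3 else 0) Xs r"
    using i by (simp add: Av_delta)
  also have "\<dots> = Av (\<lambda>m. 2 * ?L * Mv G \<xi> i m - 3 * hh * ?s i * (\<Sum>j<3. \<Sum>l<3. ?g j l * ?s l * Mv G \<xi> j m)) Xs r"
    by (rule Av_cong) (rule ID)
  also have "\<dots> = Av (\<lambda>m. (2 * ?L) * Mv G \<xi> i m) Xs r - (\<Sum>j<3. \<Sum>l<3. Av (\<lambda>m. (3 * hh * ?s i * ?g j l * ?s l) * Mv G \<xi> j m) Xs r)"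
    by (simp only: Av_diff Av_sum[symmetric] finite_lessThan sum_distrib_left mult.assoc)
  also have "\<dots> = 0"
  proof -
    have "(\<Sum>j<3. \<Sum>l<3. Av (\<lambda>m. (3 * hh * ?s i * ?g j l * ?s l) * Mv G \<xi> j m) Xs r) = 0"
      by (rule sum.neutral, rule ballI, rule sum.neutral, rule ballI, rule Z, simp)
    moreover have "Av (\<lambda>m. (2 * ?L) * Mv G \<xi> i m) Xs r = 0" using i by (rule Z)
    ultimately show ?thesis by simp
  qed
  finally show ?thesis .
qed



section \<open>Polynomial ODE facts\<close>

lemma pdn_add: "(pderiv^^n) (p + q) = (pderiv^^n) p + (pderiv^^n) (q :: complex poly)"
  by (induction n) (auto simp: pderiv_add)

lemma pdn_smult: "(pderiv^^n) (smult c p) = smult c ((pderiv^^n) (p :: complex poly))"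
  by (induction n) (auto simp: pderiv_smult)

lemma pdn_pderiv: "(pderiv^^n) (pderiv p) = pderiv ((pderiv^^n) (p :: complex poly))"
  by (simp add: funpow_swap1)

lemma pd_uniq:
  assumes d: "(d::complex) \<noteq> 0" and R: "pderiv R + smult d R = 0"
  shows "R = 0"
proof -
  have "coeff (pderiv R + smult d R) (degree R) = 0" using R by simp
  moreover have "coeff (pderiv R) (degree R) = 0"
    by (simp add: coeff_pderiv coeff_eq_0)
  ultimately have "d * lead_coeff R = 0" by simp
  then show ?thesis using d by simp
qed

lemma pd_exists_nz:
  assumes d: "(d::complex) \<noteq> 0"
  shows "\<exists>Q. pderiv Q + smult d Q = A"
proof (induction "degree A" arbitrary: A rule: less_induct)
  case less
  show ?case
  proof (cases "degree A = 0")
    case True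
    then have "pderiv A = 0" by (simp add: pderiv_eq_0_iff)
    then show ?thesis using d by (intro exI[of _ "smult (1/d) A"]) (simp add: pderiv_smult)
  next
    case False
    have "degree (smult (-1/d) (pderiv A)) < degree A"
      using False by (simp add: degree_pderiv)
    then obtain Q1 where Q1: "pderiv Q1 + smult d Q1 = smult (-1/d) (pderiv A)"
      using less by blast
    show ?thesis
    proof (intro exI[of _ "smult (1/d) A + Q1"])
      have "pderiv (smult (1/d) A + Q1) + smult d (smult (1/d) A + Q1)
          = smult (1/d) (pderiv A) + (pderiv Q1 + smult d Q1) + A"
        using d by (simp add: pderiv_add pderiv_smult algebra_simps smult_add_right)
      also have "\<dots> = A" using Q1 by (simp add: smult_add_left[symmetric])
      finally show "pderiv (smult (1/d) A + Q1) + smult d (smult (1/d) A + Q1) = A" .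
    qed
  qed
qed

lemma pd_exists_nz':
  assumes d: "(d::complex) \<noteq> 0" and n: "(pderiv^^n) A = 0"
  shows "\<exists>Q. pderiv Q + smult d Q = A \<and> (pderiv^^n) Q = 0"
proof -
  obtain Q where Q: "pderiv Q + smult d Q = A" using pd_exists_nz[OF d] by blast
  have "pderiv ((pderiv^^n) Q) + smult d ((pderiv^^n) Q) = (pderiv^^n) A"
  proof -
    have "(pderiv^^n) (pderiv Q + smult d Q) = pderiv ((pderiv^^n) Q) + smult d ((pderiv^^n) Q)"
      by (simp only: pdn_add pdn_smult pdn_pderiv)
    then show ?thesis using Q by simp
  qed
  then have "pderiv ((pderiv^^n) Q) + smult d ((pderiv^^n) Q) = 0" using n by simp
  then have "(pderiv^^n) Q = 0" by (rule pd_uniq[OF d])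
  then show ?thesis using Q by blast
qed

lemma antideriv: "\<exists>Q. pderiv Q = (A :: complex poly)"
proof -
  define Q where "Q = Poly (0 # map (\<lambda>k. coeff A k / of_nat (Suc k)) [0..<Suc (degree A)])"
  have "coeff (pderiv Q) k = coeff A k" for k
  proof (cases "k \<le> degree A")
    case True
    have "1 + complex_of_nat k \<noteq> 0"
    proof -
      have "complex_of_nat (Suc k) \<noteq> 0" by (simp only: of_nat_eq_0_iff)
      then show ?thesis by simp
    qed
    then show ?thesis
      using \<open>1 + complex_of_nat k \<noteq> 0\<close> True by (simp add: Q_def coeff_pderiv nth_default_def del: upt_Suc)
  next
    case False
    then show ?thesis
      by (simp add: Q_def coeff_pderiv nth_default_def coeff_eq_0 del: upt_Suc)
  qed
  then show ?thesis by (intro exI[of _ Q]) (simp add: poly_eq_iff)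
qed

section \<open>Exponential polynomials\<close>

definition EP :: "real \<Rightarrow> complex poly \<Rightarrow> complex poly \<Rightarrow> real \<Rightarrow> complex" where
  "EP \<mu> A B r = poly A (complex_of_real r) * exp (complex_of_real (\<mu> * r))
              + poly B (complex_of_real r) * exp (- complex_of_real (\<mu> * r))"

lemma EP_hvd: "(EP \<mu> A B has_vector_derivative
     EP \<mu> (pderiv A + smult (complex_of_real \<mu>) A) (pderiv B - smult (complex_of_real \<mu>) B) r) (at r)"
proof -
  define F where "F z = poly A z * exp (complex_of_real \<mu> * z) + poly B z * exp (- (complex_of_real \<mu> * z))" for z
  have "(F has_field_derivative EP \<mu> (pderiv A + smult (complex_of_real \<mu>) A) (pderiv B - smult (complex_of_real \<mu>) B) r)
         (at (complex_of_real r))"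
    unfolding F_def EP_def
    by (auto intro!: derivative_eq_intros poly_DERIV simp: algebra_simps)
  from has_vector_derivative_real_field[OF this]
  have "((\<lambda>x. F (complex_of_real x)) has_vector_derivative
      EP \<mu> (pderiv A + smult (complex_of_real \<mu>) A) (pderiv B - smult (complex_of_real \<mu>) B) r) (at r)" .
  moreover have "(\<lambda>x. F (complex_of_real x)) = EP \<mu> A B"
    by (simp add: fun_eq_iff F_def EP_def)
  ultimately show ?thesis by simp
qed

lemma EP_D: "vector_derivative (EP \<mu> A B) (at r)
   = EP \<mu> (pderiv A + smult (complex_of_real \<mu>) A) (pderiv B - smult (complex_of_real \<mu>) B) r"
  by (rule vector_derivative_at[OF EP_hvd])

lemma Dn_EP: "\<exists>A' B'. Dn k (EP \<mu> A B) = EP \<mu> A' B'"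
proof (induction k)
  case 0 then show ?case by auto
next
  case (Suc k)
  then obtain A' B' where AB: "Dn k (EP \<mu> A B) = EP \<mu> A' B'" by blast
  have "Dn (Suc k) (EP \<mu> A B) = EP \<mu> (pderiv A' + smult (complex_of_real \<mu>) A') (pderiv B' - smult (complex_of_real \<mu>) B')"
    unfolding Dn_Suc AB by (simp add: EP_D fun_eq_iff)
  then show ?case by blast
qed

lemma smooth_EP: "smooth_fun (EP \<mu> A B)"
  unfolding smooth_fun_def
proof (intro allI)
  fix k r
  obtain A' B' where "Dn k (EP \<mu> A B) = EP \<mu> A' B'" using Dn_EP by blast
  then show "Dn k (EP \<mu> A B) differentiable at r"
    using EP_hvd[of \<mu> A' B' r] differentiableI_vector by simp
qed

lemma EP_add: "EP \<mu> A B r + EP \<mu> A' B' r = EP \<mu> (A + A') (B + B') r"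
  by (simp add: EP_def algebra_simps)



lemma hvd_cexp: "((\<lambda>r. exp (c * complex_of_real r)) has_vector_derivative c * exp (c * complex_of_real x)) (at x)"
proof -
  have "((\<lambda>z. exp (c * z)) has_field_derivative c * exp (c * complex_of_real x)) (at (complex_of_real x))"
    by (auto intro!: derivative_eq_intros)
  from has_vector_derivative_real_field[OF this] show ?thesis .
qed

lemma hom:
  assumes sm: "smooth_fun g" and eq: "\<forall>r>0. vector_derivative g (at r) = c * g r"
  shows "\<exists>K. \<forall>r>0. g r = K * exp (c * complex_of_real r)"
proof -
  define \<phi> where "\<phi> r = g r * exp (- c * complex_of_real r)" for r
  have "(\<phi> has_vector_derivative 0) (at x within {0<..})" if x: "x \<in> {0<..}" for x
  proof -
    have g: "(g has_vector_derivative c * g x) (at x)"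
    proof -
      have "(g has_vector_derivative vector_derivative g (at x)) (at x)"
        using smooth_diff[OF sm, of x] vector_derivative_works by blast
      moreover have "vector_derivative g (at x) = c * g x" using eq x by simp
      ultimately show ?thesis by simp
    qed
    have "(\<phi> has_vector_derivative (g x * (- c * exp (- c * complex_of_real x)) + c * g x * exp (- c * complex_of_real x))) (at x)"
      unfolding \<phi>_def by (intro has_vector_derivative_mult g hvd_cexp)
    then have "(\<phi> has_vector_derivative 0) (at x)" by (simp add: algebra_simps)
    then show ?thesis by (rule has_vector_derivative_at_within)
  qed
  then obtain K where K: "\<And>x. x \<in> {0<..} \<Longrightarrow> \<phi> x = K"
    using has_vector_derivative_zero_constant[of "{0<..}" \<phi>] by (metis convex_real_interval(3))
  have "g r = K * exp (c * complex_of_real r)" if "r > 0" for r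
  proof -
    have "g r = \<phi> r * exp (c * complex_of_real r)"
      by (simp add: \<phi>_def mult.assoc exp_add[symmetric])
    then show ?thesis using K that by simp
  qed
  then show ?thesis by blast
qed

lemma EP_lin: "EP \<mu> (A + smult a Q) (B + smult a R) r = EP \<mu> A B r + a * EP \<mu> Q R r"
  by (simp add: EP_def algebra_simps)

lemma ode_gen:
  assumes sm: "smooth_fun g"
    and eq: "\<forall>r>0. vector_derivative g (at r) - c * g r = EP \<mu> A B r"
    and QA: "pderiv Q + smult (complex_of_real \<mu> - c) Q = A"
    and RB: "pderiv R + smult (- complex_of_real \<mu> - c) R = B"
  shows "\<exists>K. \<forall>r>0. g r = EP \<mu> Q R r + K * exp (c * complex_of_real r)"
proof -
  define h where "h r = g r - EP \<mu> Q R r" for r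
  have smh: "smooth_fun h"
    unfolding h_def using smooth_add[OF sm smooth_cmult[OF smooth_EP, of "-1"]] by simp
  have "vector_derivative h (at r) = c * h r" if r: "r > 0" for r
  proof -
    have "vector_derivative h (at r) = vector_derivative g (at r) - vector_derivative (EP \<mu> Q R) (at r)"
      unfolding h_def by (rule vector_derivative_diff_at) (auto intro: smooth_diff sm smooth_EP)
    also have "\<dots> = c * g r + EP \<mu> A B r - EP \<mu> (pderiv Q + smult (complex_of_real \<mu>) Q) (pderiv R - smult (complex_of_real \<mu>) R) r"
      using eq r by (simp add: EP_D algebra_simps)
    also have "EP \<mu> A B r = EP \<mu> (pderiv Q + smult (complex_of_real \<mu>) Q + smult (- c) Q) (pderiv R - smult (complex_of_real \<mu>) R + smult (- c) R) r"
      unfolding QA[symmetric] RB[symmetric] by (simp add: smult_diff_left algebra_simps)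
    also have "\<dots> = EP \<mu> (pderiv Q + smult (complex_of_real \<mu>) Q) (pderiv R - smult (complex_of_real \<mu>) R) r + (-c) * EP \<mu> Q R r"
      by (rule EP_lin)
    finally show ?thesis unfolding h_def by (simp add: algebra_simps)
  qed
  then obtain K where "\<forall>r>0. h r = K * exp (c * complex_of_real r)"
    using hom[OF smh] by blast
  then show ?thesis unfolding h_def by (metis diff_eq_eq add.commute)
qed

lemma EP_addK: "EP \<mu> Q R r + K * exp (complex_of_real \<mu> * complex_of_real r) = EP \<mu> (Q + [:K:]) R r"
  by (simp add: EP_def algebra_simps)

lemma EP_addK': "EP \<mu> Q R r + K * exp (- complex_of_real \<mu> * complex_of_real r) = EP \<mu> Q (R + [:K:]) r"
  by (simp add: EP_def algebra_simps)

lemma step_mu: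
  assumes mu: "\<mu> > 0" and sm: "smooth_fun g"
    and eq: "\<forall>r>0. vector_derivative g (at r) - complex_of_real \<mu> * g r = EP \<mu> A B r"
    and n: "(pderiv^^n) B = 0"
  shows "\<exists>A' B'. (pderiv^^n) B' = 0 \<and> (\<forall>r>0. g r = EP \<mu> A' B' r)"
proof -
  obtain Q where Q: "pderiv Q = A" using antideriv by blast
  have d: "- complex_of_real \<mu> - complex_of_real \<mu> \<noteq> 0" using mu by simp
  obtain R where R: "pderiv R + smult (- complex_of_real \<mu> - complex_of_real \<mu>) R = B" "(pderiv^^n) R = 0"
    using pd_exists_nz'[OF d n] by blast
  have QA: "pderiv Q + smult (complex_of_real \<mu> - complex_of_real \<mu>) Q = A" using Q by simp
  obtain K where K: "\<forall>r>0. g r = EP \<mu> Q R r + K * exp (complex_of_real \<mu> * complex_of_real r)"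
    using ode_gen[OF sm eq QA R(1)] by blast
  show ?thesis
    by (rule exI[of _ "Q + [:K:]"], rule exI[of _ R]) (use K R(2) EP_addK in auto)
qed

lemma step_mmu:
  assumes mu: "\<mu> > 0" and sm: "smooth_fun g"
    and eq: "\<forall>r>0. vector_derivative g (at r) + complex_of_real \<mu> * g r = EP \<mu> A B r"
    and n: "(pderiv^^n) B = 0"
  shows "\<exists>A' B'. (pderiv^^(Suc n)) B' = 0 \<and> (\<forall>r>0. g r = EP \<mu> A' B' r)"
proof -
  have d: "complex_of_real \<mu> + complex_of_real \<mu> \<noteq> 0" using mu by simp
  obtain Q where Q: "pderiv Q + smult (complex_of_real \<mu> + complex_of_real \<mu>) Q = A"
    using pd_exists_nz[OF d] by blast
  obtain R where R: "pderiv R = B" using antideriv by blast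
  have QA: "pderiv Q + smult (complex_of_real \<mu> - (- complex_of_real \<mu>)) Q = A" using Q by simp
  have RB: "pderiv R + smult (- complex_of_real \<mu> - (- complex_of_real \<mu>)) R = B" using R by simp
  have eq': "\<forall>r>0. vector_derivative g (at r) - (- complex_of_real \<mu>) * g r = EP \<mu> A B r"
    using eq by simp
  obtain K where K: "\<forall>r>0. g r = EP \<mu> Q R r + K * exp (- complex_of_real \<mu> * complex_of_real r)"
    using ode_gen[OF sm eq' QA RB] by blast
  have "(pderiv^^(Suc n)) (R + [:K:]) = 0"
    by (simp only: funpow_Suc_right o_apply pderiv_add pderiv_pCons pderiv_0) (simp add: R n)
  then show ?thesis
    by (intro exI[of _ Q] exI[of _ "R + [:K:]"]) (use K EP_addK' in auto)
qed



lemma Ap_lin1: "smooth_fun f \<Longrightarrow> Ap ([:a,1:] * q) f r = vector_derivative (Ap q f) (at r) + a * Ap q f r"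
proof -
  assume f: "smooth_fun f"
  have "Ap ([:a,1:] * q) f r = Ap [:a,1:] (Ap q f) r" by (rule fun_cong[OF Ap_mult[OF f]])
  also have "\<dots> = a * Ap q f r + vector_derivative (Ap 1 (Ap q f)) (at r)"
    using Ap_pCons[OF smooth_Ap[OF f], of a 1 q r] by (simp add: one_pCons)
  finally show ?thesis by (simp add: Ap_one)
qed

lemma EP_00: "EP \<mu> 0 0 r = 0" by (simp add: EP_def)

lemma ode6:
  assumes mu: "\<mu> > 0" and sm: "smooth_fun f"
    and eq: "\<forall>r>0. Ap ([:-complex_of_real \<mu>,1:]^3 * [:complex_of_real \<mu>,1:]^3) f r = 0"
  shows "\<exists>A B. (pderiv^^3) B = 0 \<and> (\<forall>r>0. f r = EP \<mu> A B r)"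
proof -
  let ?m = "[:-complex_of_real \<mu>,1:]" and ?p = "[:complex_of_real \<mu>,1:]"
  have sq: "\<And>q. smooth_fun (Ap q f)" using sm by (rule smooth_Ap)
  have stepm: "\<exists>A' B'. (pderiv^^n) B' = 0 \<and> (\<forall>r>0. Ap q f r = EP \<mu> A' B' r)"
    if H: "\<exists>A B. (pderiv^^n) B = 0 \<and> (\<forall>r>0. Ap (?m * q) f r = EP \<mu> A B r)" for q n
  proof -
    obtain A B where AB: "(pderiv^^n) B = 0" "\<forall>r>0. Ap (?m * q) f r = EP \<mu> A B r" using H by blast
    have "\<forall>r>0. vector_derivative (Ap q f) (at r) - complex_of_real \<mu> * Ap q f r = EP \<mu> A B r"
      using AB(2) Ap_lin1[OF sm, of "-complex_of_real \<mu>" q] by simp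
    from step_mu[OF mu sq this AB(1)] show ?thesis .
  qed
  have stepp: "\<exists>A' B'. (pderiv^^(Suc n)) B' = 0 \<and> (\<forall>r>0. Ap q f r = EP \<mu> A' B' r)"
    if H: "\<exists>A B. (pderiv^^n) B = 0 \<and> (\<forall>r>0. Ap (?p * q) f r = EP \<mu> A B r)" for q n
  proof -
    obtain A B where AB: "(pderiv^^n) B = 0" "\<forall>r>0. Ap (?p * q) f r = EP \<mu> A B r" using H by blast
    have "\<forall>r>0. vector_derivative (Ap q f) (at r) + complex_of_real \<mu> * Ap q f r = EP \<mu> A B r"
      using AB(2) Ap_lin1[OF sm, of "complex_of_real \<mu>" q] by simp
    from step_mmu[OF mu sq this AB(1)] show ?thesis .
  qed
  have r1: "\<And>x y::complex poly. x^3 * y^3 = x * (x^2 * y^3)" by algebra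
  have r2: "\<And>x y::complex poly. x^2 * y^3 = x * (x * y^3)" by algebra
  have r3: "\<And>y::complex poly. y^3 = y * y^2" by algebra
  have r4: "\<And>y::complex poly. y^2 = y * y" by algebra
  have r5: "\<And>y::complex poly. y = y * 1" by simp
  have s0: "\<exists>A B. (pderiv^^0) B = 0 \<and> (\<forall>r>0. Ap (?m * (?m^2 * ?p^3)) f r = EP \<mu> A B r)"
    using eq unfolding r1 by (intro exI[of _ 0]) (simp add: EP_00)
  have s1: "\<exists>A B. (pderiv^^0) B = 0 \<and> (\<forall>r>0. Ap (?m * (?m * ?p^3)) f r = EP \<mu> A B r)"
    using stepm[OF s0] unfolding r2 .
  have s2: "\<exists>A B. (pderiv^^0) B = 0 \<and> (\<forall>r>0. Ap (?m * (?p^3)) f r = EP \<mu> A B r)"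
    using stepm[OF s1] .
  have s3: "\<exists>A B. (pderiv^^0) B = 0 \<and> (\<forall>r>0. Ap (?p * (?p^2)) f r = EP \<mu> A B r)"
    using stepm[OF s2] unfolding r3 .
  have s4: "\<exists>A B. (pderiv^^1) B = 0 \<and> (\<forall>r>0. Ap (?p * ?p) f r = EP \<mu> A B r)"
    using stepp[OF s3] unfolding r4 by simp
  have s5: "\<exists>A B. (pderiv^^2) B = 0 \<and> (\<forall>r>0. Ap (?p * 1) f r = EP \<mu> A B r)"
    using stepp[OF s4] unfolding r5[of ?p, symmetric] by (simp add: numeral_2_eq_2)
  have s6: "\<exists>A B. (pderiv^^3) B = 0 \<and> (\<forall>r>0. Ap 1 f r = EP \<mu> A B r)"
    using stepp[OF s5] by (simp add: numeral_3_eq_3 numeral_2_eq_2)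
  then show ?thesis by (simp add: Ap_one)
qed



lemma real_pow_exp_0:
  assumes mu: "(\<mu>::real) > 0"
  shows "((\<lambda>r. r ^ m * exp (- \<mu> * r)) \<longlongrightarrow> 0) at_top"
proof -
  have lim: "((\<lambda>x. x ^ m / exp x) \<longlongrightarrow> (0::real)) at_top" by (rule tendsto_power_div_exp_0)
  have fl: "filterlim (\<lambda>r. \<mu> * r) at_top at_top"
    using mu by (intro filterlim_tendsto_pos_mult_at_top[OF tendsto_const] filterlim_ident) auto
  have "((\<lambda>r. (1 / \<mu>^m) * ((\<mu> * r) ^ m / exp (\<mu> * r))) \<longlongrightarrow> (1/\<mu>^m) * 0) at_top"
    by (intro tendsto_mult tendsto_const filterlim_compose[OF lim fl])
  moreover have "(1 / \<mu>^m) * ((\<mu> * r) ^ m / exp (\<mu> * r)) = r ^ m * exp (- \<mu> * r)" for r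
    using mu by (simp add: power_mult_distrib exp_minus field_simps)
  ultimately show ?thesis by simp
qed

lemma cpow_exp_0:
  assumes mu: "(\<mu>::real) > 0"
  shows "((\<lambda>r. complex_of_real r ^ m * exp (- complex_of_real (\<mu> * r))) \<longlongrightarrow> 0) at_top"
proof (rule tendsto_norm_zero_cancel)
  have lim: "((\<lambda>r. r ^ m * exp (- \<mu> * r)) \<longlongrightarrow> 0) at_top" by (rule real_pow_exp_0[OF mu])
  have ev: "\<forall>\<^sub>F r in at_top. norm (complex_of_real r ^ m * exp (- complex_of_real (\<mu> * r))) = r ^ m * exp (- \<mu> * r)"
    using eventually_ge_at_top[of "0::real"]
  proof eventually_elim
    case (elim r)
    have "complex_of_real r ^ m * exp (- complex_of_real (\<mu> * r)) = complex_of_real (r ^ m * exp (- \<mu> * r))"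
      by (simp flip: exp_of_real)
    then show ?case using elim by (simp only: norm_of_real) simp
  qed
  show "((\<lambda>r. norm (complex_of_real r ^ m * exp (- complex_of_real (\<mu> * r)))) \<longlongrightarrow> 0) at_top"
    using tendsto_cong[OF ev] lim by simp
qed

lemma polyB_0:
  assumes mu: "(\<mu>::real) > 0"
  shows "((\<lambda>r. poly B (complex_of_real r) * exp (- complex_of_real (\<mu> * r))) \<longlongrightarrow> 0) at_top"
proof -
  have "((\<lambda>r. \<Sum>i\<le>degree B. coeff B i * (complex_of_real r ^ i * exp (- complex_of_real (\<mu> * r)))) \<longlongrightarrow> 0) at_top"
    by (intro tendsto_null_sum tendsto_mult_right_zero cpow_exp_0[OF mu])
  then show ?thesis by (simp add: poly_altdef sum_distrib_right mult.assoc)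
qed

lemma decay:
  assumes mu: "(\<mu>::real) > 0" and f: "(f \<longlongrightarrow> 0) at_top" and eq: "\<forall>r>0. f r = EP \<mu> A B r"
  shows "A = 0"
proof -
  have ev: "\<forall>\<^sub>F r in at_top. f r - poly B (complex_of_real r) * exp (- complex_of_real (\<mu> * r))
      = poly A (complex_of_real r) * exp (complex_of_real (\<mu> * r))"
    using eventually_gt_at_top[of "0::real"] by eventually_elim (simp add: eq EP_def)
  have "((\<lambda>r. f r - poly B (complex_of_real r) * exp (- complex_of_real (\<mu> * r))) \<longlongrightarrow> 0 - 0) at_top"
    by (intro tendsto_diff f polyB_0 mu)
  then have a1: "((\<lambda>r. poly A (complex_of_real r) * exp (complex_of_real (\<mu> * r))) \<longlongrightarrow> 0) at_top"
    using tendsto_cong[OF ev] by simp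
  have "((\<lambda>r. (poly A (complex_of_real r) * exp (complex_of_real (\<mu> * r))) * (complex_of_real r ^ 0 * exp (- complex_of_real (\<mu> * r)))) \<longlongrightarrow> 0 * 0) at_top"
    by (intro tendsto_mult a1 cpow_exp_0 mu)
  then have a2: "((\<lambda>r. poly A (complex_of_real r)) \<longlongrightarrow> 0) at_top"
    by (simp add: mult.assoc exp_minus)
  show ?thesis
  proof (cases "degree A = 0")
    case True
    then obtain c where c: "A = [:c:]" by (meson degree_eq_zeroE)
    then have "((\<lambda>r. c) \<longlongrightarrow> 0) (at_top :: real filter)" using a2 by simp
    then have "c = 0" using tendsto_const_iff by (metis trivial_limit_at_top_linorder)
    then show ?thesis using c by simp
  next
    case False
    have "filterlim (\<lambda>r. poly A (complex_of_real r)) at_infinity at_top"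
      using filterlim_compose[OF filterlim_poly_at_infinity[of A] filterlim_of_real_at_infinity] False by simp
    then have False
      using not_tendsto_and_filterlim_at_infinity[OF trivial_limit_at_top_linorder a2] by simp
    then show ?thesis ..
  qed
qed



definition Tm :: "real \<Rightarrow> complex poly \<Rightarrow> complex poly" where
  "Tm \<mu> B = pderiv B - smult (complex_of_real \<mu>) B"

definition Psi :: "real \<Rightarrow> complex poly \<Rightarrow> complex poly \<Rightarrow> complex poly" where
  "Psi \<mu> p B = (\<Sum>n\<le>degree p. smult (coeff p n) ((Tm \<mu> ^^ n) B))"

lemma EP0_D: "vector_derivative (EP \<mu> 0 B) (at r) = EP \<mu> 0 (Tm \<mu> B) r"
  by (simp add: EP_D Tm_def)

lemma Dn_EP0: "Dn n (EP \<mu> 0 B) = EP \<mu> 0 ((Tm \<mu> ^^ n) B)"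
proof (induction n)
  case 0 then show ?case by simp
next
  case (Suc n)
  show ?case unfolding Dn_Suc Suc by (simp add: EP0_D fun_eq_iff)
qed

lemma EP0_add: "EP \<mu> 0 (B + B') r = EP \<mu> 0 B r + EP \<mu> 0 B' r"
  by (simp add: EP_def algebra_simps)

lemma EP0_smult: "EP \<mu> 0 (smult c B) r = c * EP \<mu> 0 B r"
  by (simp add: EP_def algebra_simps)

lemma EP0_diff: "EP \<mu> 0 (B - B') r = EP \<mu> 0 B r - EP \<mu> 0 B' r"
  by (simp add: EP_def algebra_simps)

lemma EP0_sum: "finite S \<Longrightarrow> EP \<mu> 0 (\<Sum>x\<in>S. F x) r = (\<Sum>x\<in>S. EP \<mu> 0 (F x) r)"
  by (induction S rule: finite_induct) (auto simp: EP_def distrib_right)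

lemma Ap_EP0: "Ap p (EP \<mu> 0 B) = EP \<mu> 0 (Psi \<mu> p B)"
  by (simp add: fun_eq_iff Ap_def Psi_def Dn_EP0 EP0_sum EP0_smult)

lemma EP0_inj:
  assumes "\<forall>r>0. EP \<mu> 0 B r = 0"
  shows "B = 0"
proof (rule ccontr)
  assume B: "B \<noteq> 0"
  have "complex_of_real ` {0<..} \<subseteq> {x. poly B x = 0}"
    using assms by (auto simp: EP_def)
  moreover have "infinite (complex_of_real ` {0<..})"
    by (subst finite_image_iff) (auto simp: inj_on_def infinite_Ioi)
  ultimately show False using poly_roots_finite[OF B] finite_subset by blast
qed

lemma EP0_inj': "(\<forall>r>0. EP \<mu> 0 B r = EP \<mu> 0 B' r) \<Longrightarrow> B = B'"
  using EP0_inj[of \<mu> "B - B'"] by (simp add: EP0_diff)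

lemma Psi_mult: "Psi \<mu> (p * q) B = Psi \<mu> p (Psi \<mu> q B)"
proof (rule EP0_inj', intro allI impI)
  fix r :: real
  have "EP \<mu> 0 (Psi \<mu> (p * q) B) r = Ap (p*q) (EP \<mu> 0 B) r" by (simp add: Ap_EP0)
  also have "\<dots> = Ap p (Ap q (EP \<mu> 0 B)) r" by (simp add: Ap_mult smooth_EP)
  also have "\<dots> = EP \<mu> 0 (Psi \<mu> p (Psi \<mu> q B)) r" by (simp add: Ap_EP0)
  finally show "EP \<mu> 0 (Psi \<mu> (p * q) B) r = EP \<mu> 0 (Psi \<mu> p (Psi \<mu> q B)) r" .
qed

lemma Psi_add: "Psi \<mu> (p + q) B = Psi \<mu> p B + Psi \<mu> q B"
proof (rule EP0_inj', intro allI impI)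
  fix r :: real
  show "EP \<mu> 0 (Psi \<mu> (p + q) B) r = EP \<mu> 0 (Psi \<mu> p B + Psi \<mu> q B) r"
    using Ap_add[of p q "EP \<mu> 0 B" r] by (simp add: Ap_EP0 EP0_add)
qed

lemma Psi_const: "Psi \<mu> [:c:] B = smult c B"
  by (simp add: Psi_def)

lemma Psi_x: "Psi \<mu> [:0,1:] B = Tm \<mu> B"
  by (simp add: Psi_def)

lemma Ap_fadd:
  assumes "smooth_fun f" "smooth_fun g"
  shows "Ap p (\<lambda>r. f r + g r) r = Ap p f r + Ap p g r"
proof -
  have "Dn n (\<lambda>r. f r + g r) = (\<lambda>r. Dn n f r + Dn n g r)" for n
    by (rule Dn_add[OF assms])
  then show ?thesis by (simp add: Ap_def sum.distrib algebra_simps)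
qed

lemma smooth_neg: "smooth_fun g \<Longrightarrow> smooth_fun (\<lambda>r. - g r)"
  using smooth_cmult[of g "-1"] by simp

lemma Ap_fneg: "smooth_fun g \<Longrightarrow> Ap p (\<lambda>r. - g r) r = - Ap p g r"
proof -
  assume g: "smooth_fun g"
  have "Dn n (\<lambda>r. (-1) * g r) = (\<lambda>r. (-1) * Dn n g r)" for n by (rule Dn_cmult[OF g])
  then have "Dn n (\<lambda>r. - g r) = (\<lambda>r. - Dn n g r)" for n by simp
  then show ?thesis by (simp add: Ap_def sum_negf)
qed

lemma Ap_fdiff:
  assumes "smooth_fun f" "smooth_fun g"
  shows "Ap p (\<lambda>r. f r - g r) r = Ap p f r - Ap p g r"
  using Ap_fadd[OF assms(1) smooth_neg[OF assms(2)], of p r] Ap_fneg[OF assms(2), of p r] by simp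

lemma Psi_Badd: "Psi \<mu> p (B + B') = Psi \<mu> p B + Psi \<mu> p B'"
proof (rule EP0_inj', intro allI impI)
  fix r :: real
  have e: "EP \<mu> 0 (B + B') = (\<lambda>r. EP \<mu> 0 B r + EP \<mu> 0 B' r)" by (simp add: fun_eq_iff EP0_add)
  show "EP \<mu> 0 (Psi \<mu> p (B + B')) r = EP \<mu> 0 (Psi \<mu> p B + Psi \<mu> p B') r"
    using Ap_fadd[where f="EP \<mu> 0 B" and g="EP \<mu> 0 B'" and p=p and r=r, OF smooth_EP smooth_EP] unfolding e[symmetric]
    by (simp add: Ap_EP0 EP0_add)
qed

lemma agree0:
  assumes h: "smooth_fun h" and z: "\<forall>r>0. h r = 0"
  shows "Dn n h 0 = 0"
proof -
  have c: "isCont (Dn n h) 0"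
    using smooth_Dn_diff[OF h] differentiable_imp_continuous_within by blast
  then have "(Dn n h \<longlongrightarrow> Dn n h 0) (at_right 0)"
    by (simp add: isCont_def filterlim_at_split)
  moreover have "\<forall>\<^sub>F r in at_right 0. Dn n h r = 0"
    using vanish_Dn[OF z, of n] eventually_at_right_less[of 0] by (simp add: eventually_at_right_field) (auto intro: exI[of _ 1])
  then have "(Dn n h \<longlongrightarrow> 0) (at_right 0)" by (rule tendsto_eventually)
  ultimately show ?thesis using tendsto_unique[OF trivial_limit_at_right_real] by blast
qed

lemma agree:
  assumes f: "smooth_fun f" and g: "smooth_fun g" and e: "\<forall>r>0. f r = g r" and r: "r \<ge> 0"
  shows "Ap p f r = Ap p g r"
proof -
  have h: "smooth_fun (\<lambda>r. f r - g r)"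
    using smooth_add[OF f smooth_cmult[OF g, of "-1"]] by simp
  have z: "\<forall>r>0. f r - g r = 0" using e by simp
  have "Ap p (\<lambda>r. f r - g r) r = 0"
  proof (cases "r = 0")
    case True
    then show ?thesis using agree0[OF h z] by (simp add: Ap_def)
  next
    case False
    then show ?thesis using vanish_Ap[OF z] r by simp
  qed
  then show ?thesis using Ap_fdiff[OF f g] by simp
qed

lemma deg2:
  assumes "(pderiv^^3) (B :: complex poly) = 0"
  shows "B = [:coeff B 0, coeff B 1, coeff B 2:]"
proof -
  have "pderiv ((pderiv^^2) B) = 0" using assms by (simp add: numeral_3_eq_3 numeral_2_eq_2)
  then have "degree ((pderiv^^2) B) = 0" by (simp add: pderiv_eq_0_iff)
  then have "degree B \<le> 2" by (simp add: numeral_2_eq_2 degree_pderiv)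
  then show ?thesis
    by (intro poly_eqI) (auto simp: coeff_pCons coeff_eq_0 numeral_2_eq_2 split: nat.split)
qed



lemma Psi_0p[simp]: "Psi \<mu> 0 B = 0" by (simp add: Psi_def)

lemma Psi_sum: "finite S \<Longrightarrow> Psi \<mu> (\<Sum>x\<in>S. F x) B = (\<Sum>x\<in>S. Psi \<mu> (F x) B)"
  by (induction S rule: finite_induct) (auto simp: Psi_add)

lemma Psi_cmult: "Psi \<mu> ([:c:] * p) B = smult c (Psi \<mu> p B)"
  by (simp only: Psi_mult Psi_const)

lemma Psi_Bsmult: "Psi \<mu> p (smult c B) = smult c (Psi \<mu> p B)"
proof -
  have "Psi \<mu> p (smult c B) = Psi \<mu> (p * [:c:]) B" by (simp only: Psi_mult Psi_const)
  also have "\<dots> = Psi \<mu> ([:c:] * p) B" by (simp only: mult.commute)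
  finally show ?thesis by (simp only: Psi_cmult)
qed

lemma Psi_Bsum: "finite S \<Longrightarrow> Psi \<mu> p (\<Sum>x\<in>S. F x) = (\<Sum>x\<in>S. Psi \<mu> p (F x))"
proof (induction S rule: finite_induct)
  case empty
  have "Psi \<mu> p 0 = Psi \<mu> p (smult 0 0)" by simp
  then show ?case by (simp only: Psi_Bsmult) simp
next
  case (insert x F) then show ?case by (simp add: Psi_Badd)
qed

lemma setup_metric:
  fixes G :: "nat \<Rightarrow> nat \<Rightarrow> real" and \<xi> :: "nat \<Rightarrow> real"
  assumes metric: "inv_metric G"
    and nc: "G 0 1 = 0" "G 0 2 = 0"
    and xi: "\<xi> 1 \<noteq> 0 \<or> \<xi> 2 \<noteq> 0"
  shows "\<forall>i<3. \<forall>j<3. G i j = G j i" "G 0 0 > 0"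
    "G 1 1 * \<xi> 1 * \<xi> 1 + 2 * G 1 2 * \<xi> 1 * \<xi> 2 + G 2 2 * \<xi> 2 * \<xi> 2 > 0"
proof -
  show sym: "\<forall>i<3. \<forall>j<3. G i j = G j i" using metric by (simp add: inv_metric_def)
  have pos: "\<And>v. (\<exists>i<3. v i \<noteq> 0) \<Longrightarrow> (\<Sum>i<3. \<Sum>j<3. G i j * v i * v j) > 0"
    using metric by (simp add: inv_metric_def)
  have "(\<Sum>i<3. \<Sum>j<3. G i j * (if i = 0 then 1 else 0) * (if j = 0 then 1 else 0)) > 0"
    by (rule pos) auto
  then show "G 0 0 > 0" by (simp add: eval_nat_numeral)
  have "(\<Sum>i<3. \<Sum>j<3. G i j * (if i = 0 then 0 else \<xi> i) * (if j = 0 then 0 else \<xi> j)) > 0"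
  proof (rule pos)
    show "\<exists>i<3. (if i = 0 then 0 else \<xi> i) \<noteq> 0"
    proof (cases "\<xi> 1 \<noteq> 0")
      case True then show ?thesis by (intro exI[of _ 1]) simp
    next
      case False then have "\<xi> 2 \<noteq> 0" using xi by simp
      then show ?thesis by (intro exI[of _ 2]) simp
    qed
  qed
  moreover have "G 2 1 = G 1 2" using sym by auto
  ultimately show "G 1 1 * \<xi> 1 * \<xi> 1 + 2 * G 1 2 * \<xi> 1 * \<xi> 2 + G 2 2 * \<xi> 2 * \<xi> 2 > 0"
    by (simp add: eval_nat_numeral algebra_simps)
qed

lemma Lam_nc:
  assumes sym: "\<forall>i<3. \<forall>j<3. G i j = G j i" and nc: "G 0 1 = 0" "G 0 2 = 0"
  shows "Lam G \<xi> = [:- complex_of_real (G 1 1 * \<xi> 1 * \<xi> 1 + 2 * G 1 2 * \<xi> 1 * \<xi> 2 + G 2 2 * \<xi> 2 * \<xi> 2):]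
     + [:complex_of_real (G 0 0):] * ([:0,1:] * [:0,1:])"
proof -
  have "G 1 0 = 0" "G 2 0 = 0" "G 2 1 = G 1 2" using sym nc by auto
  then show ?thesis using nc
    by (simp add: Lam_def sig_def eval_nat_numeral algebra_simps)
qed

lemma Lam_factor:
  fixes a \<mu> :: real
  shows "[:- complex_of_real (a*\<mu>^2):] + [:complex_of_real a:] * ([:0,1:] * [:0,1:])
       = smult (complex_of_real a) ([:-complex_of_real \<mu>,1:] * [:complex_of_real \<mu>,1:])"
  by (simp add: algebra_simps power2_eq_square)

lemma solve_one:
  assumes mu: "\<mu> > 0" and a: "a > 0"
    and L: "Lam G \<xi> = [:- complex_of_real (a*\<mu>^2):] + [:complex_of_real a:] * ([:0,1:] * [:0,1:])"
    and sm: "smooth_fun f" and dec: "(f \<longlongrightarrow> 0) at_top"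
    and eq: "\<forall>r>0. Ap (Lam G \<xi> ^ 3) f r = 0"
  shows "\<exists>b0 b1 b2. \<forall>r>0. f r = EP \<mu> 0 [:b0,b1,b2:] r"
proof -
  have L3: "Lam G \<xi> ^ 3 = smult (complex_of_real a ^ 3) ([:-complex_of_real \<mu>,1:]^3 * [:complex_of_real \<mu>,1:]^3)"
    unfolding L Lam_factor by (simp only: smult_power power_mult_distrib)
  have "\<forall>r>0. Ap ([:-complex_of_real \<mu>,1:]^3 * [:complex_of_real \<mu>,1:]^3) f r = 0"
    using eq a unfolding L3 by (simp add: Ap_smult)
  from ode6[OF mu sm this] obtain A B where AB: "(pderiv^^3) B = 0" "\<forall>r>0. f r = EP \<mu> A B r" by blast
  have "A = 0" by (rule decay[OF mu dec AB(2)])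
  then show ?thesis using AB deg2[OF AB(1)] by metis
qed

lemma Psi_Lam:
  assumes L: "Lam G \<xi> = [:- complex_of_real (a*\<mu>^2):] + [:complex_of_real a:] * ([:0,1:] * [:0,1:])"
  shows "Psi \<mu> (Lam G \<xi>) B = smult (- complex_of_real (a*\<mu>^2)) B + smult (complex_of_real a) (Tm \<mu> (Tm \<mu> B))"
  unfolding L by (simp only: Psi_add Psi_const Psi_mult Psi_x)

lemma EP0_at0: "EP \<mu> 0 B 0 = poly B 0"
  by (simp add: EP_def)

lemma scalar_part:
  assumes mu: "\<mu> > 0" and a: "a > 0"
    and L: "Lam G \<xi> = [:- complex_of_real (a*\<mu>^2):] + [:complex_of_real a:] * ([:0,1:] * [:0,1:])"
    and sm: "smooth_fun X"
    and eq_scal: "\<forall>r\<ge>0. Pscal G \<xi> X r = 0"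
    and bc_X: "X 0 = 0"
    and bc_lapX: "lap G \<xi> X 0 = 0"
    and decay_X: "(X \<longlongrightarrow> 0) at_top"
  shows "\<forall>r\<ge>0. X r = 0"
proof -
  let ?L = "Lam G \<xi>"
  have lapX: "lap G \<xi> X = Ap ?L X" by (rule lap_Ap[OF sm])
  have "Pscal G \<xi> X r = 2 * Ap (?L * ?L) X r" for r
    unfolding Pscal_def lapX lap_Ap[OF smooth_Ap[OF sm]] Ap_mult[OF sm] by simp
  then have PL: "\<forall>r\<ge>0. Ap (?L * ?L) X r = 0" using eq_scal by simp
  have "\<forall>r>0. Ap (?L ^ 3) X r = 0"
  proof (intro allI impI)
    fix r :: real assume r: "r > 0"
    have "Ap (?L ^ 3) X r = Ap ?L (Ap (?L * ?L) X) r"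
      by (simp add: Ap_mult[OF sm, symmetric] power3_eq_cube mult.assoc)
    also have "\<dots> = 0" using PL r by (intro vanish_Ap) auto
    finally show "Ap (?L ^ 3) X r = 0" .
  qed
  from solve_one[OF mu a L sm decay_X this] obtain b0 b1 b2
    where B: "\<forall>r>0. X r = EP \<mu> 0 [:b0,b1,b2:] r" by blast
  define B where "B = [:b0,b1,b2:]"
  have ag: "Ap p X r = EP \<mu> 0 (Psi \<mu> p B) r" if "r \<ge> 0" for p r
    using agree[OF sm smooth_EP, of \<mu> 0 B r p] B that unfolding B_def by (simp add: Ap_EP0)
  have "X 0 = b0" using ag[of 0 1] by (simp add: Ap_const one_pCons Psi_const EP0_at0 B_def)
  then have b0: "b0 = 0" using bc_X by simp
  have "\<forall>r>0. EP \<mu> 0 (Psi \<mu> (?L * ?L) B) r = 0" using PL ag by force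
  then have "Psi \<mu> (?L * ?L) B = 0" by (rule EP0_inj)
  then have e1: "Psi \<mu> ?L (Psi \<mu> ?L B) = 0" by (simp add: Psi_mult)
  have e2: "poly (Psi \<mu> ?L B) 0 = 0" using ag[of 0 ?L] bc_lapX lapX by (simp add: EP0_at0)
  have "b2 = 0" "b1 = 0"
    using e1 e2 mu a unfolding Psi_Lam[OF L] B_def b0
    by (simp_all add: Tm_def pderiv_pCons algebra_simps power2_eq_square)
  then show ?thesis using B b0 bc_X by (auto simp: EP_def less_eq_real_def)
qed



definition PL :: "real \<Rightarrow> real \<Rightarrow> complex poly \<Rightarrow> complex poly" where
  "PL a \<mu> B = smult (- complex_of_real (a*\<mu>^2)) B + smult (complex_of_real a) (Tm \<mu> (Tm \<mu> B))"

lemma alg0_core: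
  fixes x y c0 c1 c2 w1 w2 :: complex
  assumes x: "x \<noteq> 0" and y: "y \<noteq> 0"
  and e1: "c0 * (x * (x * (y * (y * 19)))) = c1 * (w1 * (x * (y * 9))) + c2 * (w2 * (x * (y * 9)))"
  and e2: "c1 * (w1 * (x * (x * (y * 6)))) + c2 * (w2 * (x * (x * (y * 6)))) = c0 * (x * (x * (x * (y * (y * 6)))))"
  shows "c0 = 0 \<and> c1 * w1 + c2 * w2 = 0"
proof -
  have "(c1*w1+c2*w2 - c0*x*y) * (6*x*x*y) = 0" using e2 by algebra
  then have z: "c1*w1+c2*w2 = c0*x*y" using x y by simp
  have "c0 * (10*x*x*y*y) = 0" using e1 z by algebra
  then have "c0 = 0" using x y by simp
  then show ?thesis using z by simp
qed

lemma alg0: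
  fixes a \<mu> :: real and c0 c1 c2 w1 w2 :: complex
  assumes mu: "\<mu> > 0" and a: "a > 0"
  and E: "smult (3/2) (PL a \<mu> (Tm \<mu> D)) + smult (1/2) (PL a \<mu> (PL a \<mu> [:0,0,c0:])) = 0"
  and D: "D = smult (complex_of_real a) (Tm \<mu> [:0,0,c0:]) + smult w1 [:0,0,c1:] + smult w2 [:0,0,c2:]"
  shows "c0 = 0 \<and> w1 * c1 + w2 * c2 = 0"
proof -
  have x: "complex_of_real \<mu> \<noteq> 0" "complex_of_real a \<noteq> 0" using mu a by auto
  show ?thesis
    using E unfolding D PL_def
    apply (simp add: Tm_def pderiv_pCons algebra_simps power2_eq_square)
    using mu a
    apply (auto simp: algebra_simps)
     apply (drule alg0_core[OF x], assumption, simp)+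
    done
qed

lemma algA:
  fixes a \<mu> :: real and c :: complex
  assumes mu: "\<mu> > 0" and a: "a > 0"
  and E: "smult (3/2) (PL a \<mu> (smult t 0)) + smult (1/2) (PL a \<mu> (PL a \<mu> [:0,0,c:])) = 0"
  shows "c = 0"
  using E unfolding PL_def
  apply (simp add: Tm_def pderiv_pCons algebra_simps power2_eq_square)
  using mu a
  apply (auto simp: algebra_simps)
  done

definition W :: "(nat \<Rightarrow> nat \<Rightarrow> real) \<Rightarrow> (nat \<Rightarrow> real) \<Rightarrow> nat \<Rightarrow> complex poly" where
  "W G \<xi> m = (\<Sum>k<3. gg G m k * sig \<xi> k)"

lemma ring1: "(h::'a::comm_ring_1) * L * s * w + s * L * w = (h + 1) * (L * (s * w))"
  by (simp add: algebra_simps)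

lemma Mv_form:
  assumes sym: "\<forall>i<3. \<forall>j<3. G i j = G j i" and i: "i < 3" and m: "m < 3"
  shows "Mv G \<xi> i m = [:3/2:] * (Lam G \<xi> * (sig \<xi> i * W G \<xi> m)) + (if m = i then [:1/2:] * (Lam G \<xi> * Lam G \<xi>) else 0)"
proof -
  have g10: "gg G 1 0 = gg G 0 1" "gg G 2 0 = gg G 0 2" "gg G 2 1 = gg G 1 2"
    using sym by auto
  have Wm: "(\<Sum>k<3. gg G k m * sig \<xi> k) = W G \<xi> m"
    unfolding W_def using sym m by (intro sum.cong) auto
  have "Mv G \<xi> i m = hh * Lam G \<xi> * sig \<xi> i * (\<Sum>k<3. gg G k m * sig \<xi> k) + sig \<xi> i * Lam G \<xi> * (\<Sum>k<3. gg G k m * sig \<xi> k) + (if m = i then hh * Lam G \<xi> * (\<Sum>j<3. \<Sum>l<3. gg G j l * sig \<xi> j * sig \<xi> l) else 0)"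
    unfolding Mv_def by (rule Mform[OF g10 i m])
  also have "\<dots> = (hh + 1) * (Lam G \<xi> * (sig \<xi> i * W G \<xi> m)) + (if m = i then hh * (Lam G \<xi> * Lam G \<xi>) else 0)"
    unfolding Wm Lam_gg[symmetric] ring1 by (simp add: mult.assoc)
  also have "hh + 1 = [:3/2:]" by (simp add: one_pCons)
  finally show ?thesis .
qed

lemma Psi_smult[simp]: "Psi \<mu> (smult c p) B = smult c (Psi \<mu> p B)"
  using Psi_cmult[of \<mu> c p B] by simp

lemma Psi_Mv:
  assumes sym: "\<forall>i<3. \<forall>j<3. G i j = G j i" and i: "i < 3" and m: "m < 3"
  shows "Psi \<mu> (Mv G \<xi> i m) B = smult (3/2) (Psi \<mu> (Lam G \<xi>) (Psi \<mu> (sig \<xi> i) (Psi \<mu> (W G \<xi> m) B)))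
     + (if m = i then smult (1/2) (Psi \<mu> (Lam G \<xi>) (Psi \<mu> (Lam G \<xi>) B)) else 0)"
  unfolding Mv_form[OF sym i m] by (simp add: Psi_add Psi_cmult Psi_mult)

lemma Psi_sig: "Psi \<mu> (sig \<xi> k) B = (if k = 0 then Tm \<mu> B else smult (\<i> * complex_of_real (\<xi> k)) B)"
  by (simp add: sig_def Psi_x Psi_const)

lemma Psi_W:
  "Psi \<mu> (W G \<xi> m) B = (\<Sum>k<3. smult (complex_of_real (G m k)) (Psi \<mu> (sig \<xi> k) B))"
  unfolding W_def by (simp add: Psi_sum Psi_cmult)

lemma smult_sum_right: "smult c (\<Sum>x\<in>S. F x) = (\<Sum>x\<in>S. smult c (F x))"
  by (induction S rule: infinite_finite_induct) (auto simp: smult_add_right)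

lemma Psi_Mv_sum:
  assumes sym: "\<forall>i<3. \<forall>j<3. G i j = G j i" and i: "i < 3"
  shows "(\<Sum>m<3. Psi \<mu> (Mv G \<xi> i m) (Bf m)) = smult (3/2) (Psi \<mu> (Lam G \<xi>) (Psi \<mu> (sig \<xi> i) (\<Sum>m<3. Psi \<mu> (W G \<xi> m) (Bf m))))
     + smult (1/2) (Psi \<mu> (Lam G \<xi>) (Psi \<mu> (Lam G \<xi>) (Bf i)))"
proof -
  have "(\<Sum>m<3. Psi \<mu> (Mv G \<xi> i m) (Bf m)) = (\<Sum>m<3. smult (3/2) (Psi \<mu> (Lam G \<xi>) (Psi \<mu> (sig \<xi> i) (Psi \<mu> (W G \<xi> m) (Bf m))))
     + (if m = i then smult (1/2) (Psi \<mu> (Lam G \<xi>) (Psi \<mu> (Lam G \<xi>) (Bf m))) else 0))"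
    using Psi_Mv[OF sym i] by (intro sum.cong) auto
  also have "\<dots> = (\<Sum>m<3. smult (3/2) (Psi \<mu> (Lam G \<xi>) (Psi \<mu> (sig \<xi> i) (Psi \<mu> (W G \<xi> m) (Bf m)))))
     + smult (1/2) (Psi \<mu> (Lam G \<xi>) (Psi \<mu> (Lam G \<xi>) (Bf i)))"
    using i by (simp add: sum.distrib)
  finally show ?thesis by (simp add: Psi_Bsum smult_sum_right)
qed



lemma vector_part:
  fixes G :: "nat \<Rightarrow> nat \<Rightarrow> real" and \<xi> :: "nat \<Rightarrow> real" and Xs :: "nat \<Rightarrow> real \<Rightarrow> complex"
  assumes mu: "\<mu> > 0" and a: "a > 0" and aG: "G 0 0 = a"
    and L: "Lam G \<xi> = [:- complex_of_real (a*\<mu>^2):] + [:complex_of_real a:] * ([:0,1:] * [:0,1:])"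
    and sym: "\<forall>i<3. \<forall>j<3. G i j = G j i"
    and nc: "G 0 1 = 0" "G 0 2 = 0"
    and sm: "\<forall>i<3. smooth_fun (Xs i)"
    and eq_vec: "\<forall>i<3. \<forall>r\<ge>0. Pvec G \<xi> Xs i r = 0"
    and bc_Xi: "\<forall>i<3. Xs i 0 = 0"
    and bc_dXi: "\<forall>i<3. nder G \<xi> (Xs i) 0 = 0"
    and decay_Xi: "\<forall>i<3. (Xs i \<longlongrightarrow> 0) at_top"
  shows "\<forall>i<3. \<forall>r\<ge>0. Xs i r = 0"
proof -
  have G10: "G 1 0 = 0" "G 2 0 = 0" using sym nc by auto
  have L3: "\<forall>r>0. Ap (Lam G \<xi> ^ 3) (Xs m) r = 0" if "m < 3" for m
    using vec_L3[OF sm sym eq_vec that] by auto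
  have "\<forall>m\<in>{..<3}. \<exists>B. (\<forall>r>0. Xs m r = EP \<mu> 0 B r) \<and> B = [:coeff B 0, coeff B 1, coeff B 2:]"
  proof
    fix m assume "m \<in> {..<3::nat}"
    then have m: "m < 3" by simp
    obtain b0 b1 b2 where "\<forall>r>0. Xs m r = EP \<mu> 0 [:b0,b1,b2:] r"
      using solve_one[OF mu a L _ _ L3[OF m]] sm decay_Xi m by blast
    then show "\<exists>B. (\<forall>r>0. Xs m r = EP \<mu> 0 B r) \<and> B = [:coeff B 0, coeff B 1, coeff B 2:]"
      by (intro exI[of _ "[:b0,b1,b2:]"]) (simp add: numeral_2_eq_2)
  qed
  from bchoice[OF this] obtain Bf where
    Bf: "\<forall>m\<in>{..<3}. (\<forall>r>0. Xs m r = EP \<mu> 0 (Bf m) r) \<and> Bf m = [:coeff (Bf m) 0, coeff (Bf m) 1, coeff (Bf m) 2:]"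
    by blast
  have Bfe: "\<exists>b0 b1 b2. Bf m = [:b0,b1,b2:]" if m: "m < 3" for m
  proof -
    have "Bf m = [:coeff (Bf m) 0, coeff (Bf m) 1, coeff (Bf m) 2:]" using Bf m by blast
    then show ?thesis by blast
  qed
  have ag: "Ap p (Xs m) r = EP \<mu> 0 (Psi \<mu> p (Bf m)) r" if "m < 3" "r \<ge> 0" for m p r
  proof -
    have "smooth_fun (Xs m)" using sm that by simp
    from agree[OF this smooth_EP, of \<mu> 0 "Bf m" r p] Bf that show ?thesis by (simp add: Ap_EP0)
  qed
  have c0: "coeff (Bf m) 0 = 0" if m: "m < 3" for m
  proof -
    have "Xs m 0 = poly (Bf m) 0" using ag[OF m, of 0 "[:1:]"] by (simp add: Ap_const Psi_const EP0_at0)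
    then show ?thesis using bc_Xi m by (simp add: poly_0_coeff_0)
  qed
  have c1: "coeff (Bf m) 1 = 0" if m: "m < 3" for m
  proof -
    have "nder G \<xi> (Xs m) 0 = complex_of_real (G 0 0 / sqrt (G 0 0)) * dop \<xi> 0 (Xs m) 0"
      unfolding nder_def using G10 by (simp add: eval_nat_numeral)
    moreover have "dop \<xi> 0 (Xs m) 0 = poly (Tm \<mu> (Bf m)) 0"
      using ag[OF m, of 0 "sig \<xi> 0"] sm m by (simp add: dop_Ap sig_def Psi_x EP0_at0)
    moreover have "complex_of_real (G 0 0 / sqrt (G 0 0)) \<noteq> 0" using a aG by simp
    ultimately have pz: "poly (Tm \<mu> (Bf m)) 0 = 0" using bc_dXi m by simp
    obtain b0 b1 b2 where bb: "Bf m = [:b0, b1, b2:]" using Bfe[OF m] by blast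
    have "b0 = 0" using c0[OF m] bb by simp
    then show ?thesis using pz bb by (simp add: Tm_def pderiv_pCons)
  qed
  define cc where "cc m = coeff (Bf m) 2" for m
  have Bf2: "Bf m = [:0,0,cc m:]" if m: "m < 3" for m
  proof -
    obtain b0 b1 b2 where b: "Bf m = [:b0, b1, b2:]" using Bfe[OF m] by blast
    then show ?thesis using c0[OF m] c1[OF m] unfolding cc_def by (simp add: numeral_2_eq_2)
  qed
  have E: "(\<Sum>m<3. Psi \<mu> (Mv G \<xi> i m) (Bf m)) = 0" if i: "i < 3" for i
  proof (rule EP0_inj, intro allI impI)
    fix r :: real assume r: "r > 0"
    have "EP \<mu> 0 (\<Sum>m<3. Psi \<mu> (Mv G \<xi> i m) (Bf m)) r = (\<Sum>m<3. Ap (Mv G \<xi> i m) (Xs m) r)"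
      using ag r by (simp add: EP0_sum)
    also have "\<dots> = Pvec G \<xi> Xs i r" using Pvec_Av[OF sm i] by (simp add: Av_def)
    also have "\<dots> = 0" using eq_vec i r by simp
    finally show "EP \<mu> 0 (\<Sum>m<3. Psi \<mu> (Mv G \<xi> i m) (Bf m)) r = 0" .
  qed
  define w where "w m = complex_of_real (G m 1) * (\<i> * complex_of_real (\<xi> 1)) + complex_of_real (G m 2) * (\<i> * complex_of_real (\<xi> 2))" for m
  have D: "(\<Sum>m<3. Psi \<mu> (W G \<xi> m) (Bf m)) = smult (complex_of_real a) (Tm \<mu> [:0,0,cc 0:]) + smult (w 1) [:0,0,cc 1:] + smult (w 2) [:0,0,cc 2:]"
    using G10 nc aG Bf2[of 0] Bf2[of 1] Bf2[of 2]
    by (simp add: Psi_W Psi_sig eval_nat_numeral w_def smult_add_left) (simp add: algebra_simps)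
  have PLL: "Psi \<mu> (Lam G \<xi>) B = PL a \<mu> B" for B
    unfolding PL_def by (rule Psi_Lam[OF L])
  have E': "smult (3/2) (PL a \<mu> (Psi \<mu> (sig \<xi> i) (\<Sum>m<3. Psi \<mu> (W G \<xi> m) (Bf m)))) + smult (1/2) (PL a \<mu> (PL a \<mu> [:0,0,cc i:])) = 0"
    if i: "i < 3" for i
    using E[OF i] Psi_Mv_sum[OF sym i, of \<mu> \<xi> Bf] Bf2[OF i] by (simp add: PLL)
  have "cc 0 = 0 \<and> w 1 * cc 1 + w 2 * cc 2 = 0"
    using E'[of 0] by (intro alg0[OF mu a _ D]) (simp add: Psi_sig)
  then have D0: "(\<Sum>m<3. Psi \<mu> (W G \<xi> m) (Bf m)) = smult 0 0"
    unfolding D by (simp add: Tm_def)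
  have "cc 1 = 0" using E'[of 1] unfolding D0 by (intro algA[OF mu a]) (simp add: Psi_sig)
  moreover have "cc 2 = 0" using E'[of 2] unfolding D0 by (intro algA[OF mu a]) (simp add: Psi_sig)
  ultimately have "Bf m = 0" if "m < 3" for m
    using Bf2 \<open>cc 0 = 0 \<and> _\<close> that by (auto simp: less_Suc_eq eval_nat_numeral)
  then show ?thesis using Bf bc_Xi by (auto simp: EP_def less_eq_real_def)
qed



theorem lemma4:
  fixes G :: "nat \<Rightarrow> nat \<Rightarrow> real" and \<xi> :: "nat \<Rightarrow> real"
    and X :: "real \<Rightarrow> complex" and Xs :: "nat \<Rightarrow> real \<Rightarrow> complex"
  assumes metric: "inv_metric G"
    and normal_coords: "G 0 1 = 0" "G 0 2 = 0"
    and xi_nonzero: "\<xi> 1 \<noteq> 0 \<or> \<xi> 2 \<noteq> 0"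
    and smooth: "smooth_fun X" "\<forall>i<3. smooth_fun (Xs i)"
    and eq_scal: "\<forall>r\<ge>0. Pscal G \<xi> X r = 0"
    and eq_vec: "\<forall>i<3. \<forall>r\<ge>0. Pvec G \<xi> Xs i r = 0"
    and bc_X: "X 0 = 0"
    and bc_lapX: "lap G \<xi> X 0 = 0"
    and bc_Xi: "\<forall>i<3. Xs i 0 = 0"
    and bc_dXi: "\<forall>i<3. nder G \<xi> (Xs i) 0 = 0"
    and decay_X: "(X \<longlongrightarrow> 0) at_top"
    and decay_Xi: "\<forall>i<3. (Xs i \<longlongrightarrow> 0) at_top"
  shows "(\<forall>r\<ge>0. X r = 0) \<and> (\<forall>i<3. \<forall>r\<ge>0. Xs i r = 0)"
proof -
  note S = setup_metric[OF metric normal_coords xi_nonzero]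
  define a where "a = G 0 0"
  define k2 where "k2 = G 1 1 * \<xi> 1 * \<xi> 1 + 2 * G 1 2 * \<xi> 1 * \<xi> 2 + G 2 2 * \<xi> 2 * \<xi> 2"
  define \<mu> where "\<mu> = sqrt (k2 / a)"
  have a: "a > 0" using S(2) unfolding a_def .
  have k2: "k2 > 0" using S(3) unfolding k2_def .
  have mu: "\<mu> > 0" unfolding \<mu>_def using a k2 by simp
  have amu: "a * \<mu>^2 = k2" unfolding \<mu>_def using a k2 by simp
  have L: "Lam G \<xi> = [:- complex_of_real (a*\<mu>^2):] + [:complex_of_real a:] * ([:0,1:] * [:0,1:])"
  proof -
    have L0: "Lam G \<xi> = [:- complex_of_real k2:] + [:complex_of_real a:] * ([:0,1:] * [:0,1:])"
      unfolding k2_def a_def by (rule Lam_nc[OF S(1) normal_coords])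
    show ?thesis unfolding amu by (rule L0)
  qed
  have "\<forall>r\<ge>0. X r = 0"
    by (rule scalar_part[OF mu a L smooth(1) eq_scal bc_X bc_lapX decay_X])
  moreover have "\<forall>i<3. \<forall>r\<ge>0. Xs i r = 0"
    by (rule vector_part[OF mu a a_def[symmetric] L S(1) normal_coords smooth(2) eq_vec bc_Xi bc_dXi decay_Xi])
  ultimately show ?thesis ..
qed


end
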